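(* Let $x\in J$. Then $x$ is an extreme point of $B_J$ if and only if $x$ has NPR hereditarily and $\|x\|_2=1$.
   Context: For a real sequence $x=(x(n))_{n\in\mathbb N}$ let $\|x\|_J=\sup\bigl(\sum_{i=1}^n|\sum_{k\in I_i}x(k)|^2\bigr)^{1/2}$ over all $n$ and all families of pairwise disjoint intervals $I_1,\dots,I_n$ of $\mathbb N$ (intervals: nonempty sets of consecutive positive integers, possibly infinite). $J=\{x:\|x\|_J<\infty\}$ with closed unit ball $B_J$; $\|\cdot\|_2$ is the $\ell_2$ norm; for $x\in J$ the series $\sum_n x(n)$ and $\sum_{n\in I}x(n)$ (for intervals $I$) converge. For $A\subset\mathbb N$, $x|_A$ equals $x$ on $A$ and $0$ off $A$. A vector $x\in J$ has non-positive remainder (NPR) if $|\sum_n x(n)|^2\le\sum_n|x(n)|^2$; it has NPR hereditarily if $x|_I$ has NPR for every interval $I$ of $\mathbb N$. *)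

theory Defs
  imports "HOL-Analysis.Analysis"
begin

text \<open>Sequences are functions nat => real; the positive integers 1,2,3,... of the
paper are indexed here by 0,1,2,... (a harmless shift).\<close>

definition nat_interval :: "nat set \<Rightarrow> bool" where
  "nat_interval I \<longleftrightarrow> I \<noteq> {} \<and> (\<forall>a b c. a \<in> I \<longrightarrow> c \<in> I \<longrightarrow> a \<le> b \<longrightarrow> b \<le> c \<longrightarrow> b \<in> I)"

definition restr :: "(nat \<Rightarrow> real) \<Rightarrow> nat set \<Rightarrow> nat \<Rightarrow> real" where
  "restr x A = (\<lambda>n. if n \<in> A then x n else 0)"

definition isum :: "(nat \<Rightarrow> real) \<Rightarrow> nat set \<Rightarrow> real" where
  "isum x A = (\<Sum>n. restr x A n)"

definition J_vals :: "(nat \<Rightarrow> real) \<Rightarrow> real set" where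
  "J_vals x = {sqrt (\<Sum>i<n. \<bar>isum x (I i)\<bar>^2) | (n::nat) (I::nat \<Rightarrow> nat set).
      (\<forall>i<n. nat_interval (I i)) \<and> (\<forall>i<n. \<forall>j<n. i \<noteq> j \<longrightarrow> I i \<inter> I j = {})}"

definition J_norm :: "(nat \<Rightarrow> real) \<Rightarrow> real" where
  "J_norm x = Sup (J_vals x)"

text \<open>The James space; the convergence of the interval series is part of the
membership condition (it follows anyway from boundedness of the J-norm).\<close>
definition J_space :: "(nat \<Rightarrow> real) set" where
  "J_space = {x. (\<forall>I. nat_interval I \<longrightarrow> summable (restr x I)) \<and> bdd_above (J_vals x)}"

definition B_J :: "(nat \<Rightarrow> real) set" where
  "B_J = {x \<in> J_space. J_norm x \<le> 1}"

definition l2_norm :: "(nat \<Rightarrow> real) \<Rightarrow> real" where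
  "l2_norm x = sqrt (\<Sum>n. (x n)^2)"

definition NPR :: "(nat \<Rightarrow> real) \<Rightarrow> bool" where
  "NPR x \<longleftrightarrow> \<bar>\<Sum>n. x n\<bar>^2 \<le> (\<Sum>n. \<bar>x n\<bar>^2)"

definition NPR_hered :: "(nat \<Rightarrow> real) \<Rightarrow> bool" where
  "NPR_hered x \<longleftrightarrow> (\<forall>I. nat_interval I \<longrightarrow> NPR (restr x I))"

text \<open>Extreme point of a set of sequences (the space of sequences is not a
real_vector instance, so this unfolds the library notion extreme_point_of:
x is in S and not in the open segment between two points of S).\<close>
definition extreme_point_seq :: "(nat \<Rightarrow> real) \<Rightarrow> (nat \<Rightarrow> real) set \<Rightarrow> bool" where
  "extreme_point_seq x S \<longleftrightarrow> x \<in> S \<and>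
     (\<forall>a\<in>S. \<forall>b\<in>S. \<forall>t::real. a \<noteq> b \<and> 0 < t \<and> t < 1 \<longrightarrow> x \<noteq> (\<lambda>n. (1 - t) * a n + t * b n))"

end

theory Submission
  imports Defs
begin


definition cvx :: "nat set \<Rightarrow> bool" where
  "cvx A \<longleftrightarrow> (\<forall>a b c. a \<in> A \<longrightarrow> c \<in> A \<longrightarrow> a \<le> b \<longrightarrow> b \<le> c \<longrightarrow> b \<in> A)"

definition famK :: "'i set \<Rightarrow> ('i \<Rightarrow> nat set) \<Rightarrow> bool" where
  "famK K I \<longleftrightarrow> finite K \<and> (\<forall>i\<in>K. cvx (I i)) \<and> (\<forall>i\<in>K. \<forall>j\<in>K. i \<noteq> j \<longrightarrow> I i \<inter> I j = {})"

definition valK :: "(nat \<Rightarrow> real) \<Rightarrow> 'i set \<Rightarrow> ('i \<Rightarrow> nat set) \<Rightarrow> real" where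
  "valK x K I = (\<Sum>i\<in>K. (isum x (I i))^2)"

definition famN :: "nat \<Rightarrow> (nat \<Rightarrow> nat set) \<Rightarrow> bool" where
  "famN n I \<longleftrightarrow> (\<forall>i<n. nat_interval (I i)) \<and> (\<forall>i<n. \<forall>j<n. i \<noteq> j \<longrightarrow> I i \<inter> I j = {})"

lemma nat_interval_cvx: "nat_interval A \<longleftrightarrow> A \<noteq> {} \<and> cvx A"
  unfolding nat_interval_def cvx_def by simp

lemma cvx_empty[simp]: "cvx {}" by (simp add: cvx_def)
lemma cvx_single[simp]: "cvx {k}" unfolding cvx_def by simp
lemma cvx_lessThan[simp]: "cvx {..<N}" by (auto simp: cvx_def)
lemma cvx_atLeast[simp]: "cvx {N..}" by (auto simp: cvx_def)
lemma cvx_atMost[simp]: "cvx {..N}" by (auto simp: cvx_def)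
lemma cvx_Int: "cvx A \<Longrightarrow> cvx B \<Longrightarrow> cvx (A \<inter> B)" unfolding cvx_def by blast
lemma cvx_Un: assumes A: "cvx A" and B: "cvx B" and p: "p \<in> A" "p \<in> B" shows "cvx (A \<union> B)"
  unfolding cvx_def
proof (intro allI impI)
  fix a b c assume h: "a \<in> A \<union> B" "c \<in> A \<union> B" "a \<le> b" "b \<le> c"
  have cA: "\<And>a b c. a \<in> A \<Longrightarrow> c \<in> A \<Longrightarrow> a \<le> b \<Longrightarrow> b \<le> c \<Longrightarrow> b \<in> A" using A unfolding cvx_def by blast
  have cB: "\<And>a b c. a \<in> B \<Longrightarrow> c \<in> B \<Longrightarrow> a \<le> b \<Longrightarrow> b \<le> c \<Longrightarrow> b \<in> B" using B unfolding cvx_def by blast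
  show "b \<in> A \<union> B"
  proof (cases "b \<le> p")
    case True
    from h(1) show ?thesis
    proof
      assume "a \<in> A" then show ?thesis using cA[of a p b] p True h by simp
    next
      assume "a \<in> B" then show ?thesis using cB[of a p b] p True h by simp
    qed
  next
    case False
    from h(2) show ?thesis
    proof
      assume "c \<in> A" then show ?thesis using cA[of p c b] p False h by simp
    next
      assume "c \<in> B" then show ?thesis using cB[of p c b] p False h by simp
    qed
  qed
qed

lemma J_vals_eq: "J_vals x = {sqrt (valK x {..<n} I) | n I. famN n I}"
  unfolding J_vals_def valK_def famN_def by (simp add: power2_abs)

lemma famN_famK: "famN n I \<Longrightarrow> famK {..<n} I"
  unfolding famN_def famK_def nat_interval_cvx by auto

lemma summable_restr: assumes "x \<in> J_space" "cvx A" shows "summable (restr x A)"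
proof (cases "A = {}")
  case True then show ?thesis by (simp add: restr_def)
next
  case False then show ?thesis using assms by (auto simp: J_space_def nat_interval_cvx)
qed

lemma isum_empty[simp]: "isum x {} = 0" by (simp add: isum_def restr_def)

lemma isum_finite: assumes "finite A" shows "isum x A = (\<Sum>n\<in>A. x n)"
proof -
  have "(\<Sum>n. restr x A n) = (\<Sum>n\<in>A. restr x A n)"
    by (rule suminf_finite) (use assms in \<open>auto simp: restr_def\<close>)
  then show ?thesis by (simp add: isum_def restr_def)
qed

lemma isum_single[simp]: "isum x {k} = x k" by (simp add: isum_finite)

lemma isum_Un: assumes "A \<inter> B = {}" "summable (restr x A)" "summable (restr x B)"
  shows "isum x (A \<union> B) = isum x A + isum x B"
proof -
  have "restr x (A \<union> B) = (\<lambda>n. restr x A n + restr x B n)"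
    using assms(1) by (auto simp: restr_def fun_eq_iff)
  then show ?thesis unfolding isum_def using suminf_add[OF assms(2,3)] by simp
qed

lemma J_bdd: "x \<in> J_space \<Longrightarrow> bdd_above (J_vals x)" by (simp add: J_space_def)

lemma J_nonneg: assumes "x \<in> J_space" shows "0 \<le> J_norm x"
proof -
  have "0 \<in> J_vals x" unfolding J_vals_eq famN_def valK_def
    by (rule CollectI, rule exI[of _ 0], auto)
  then show ?thesis unfolding J_norm_def using J_bdd[OF assms] by (meson cSup_upper)
qed


lemma fam_le: assumes x: "x \<in> J_space" and F: "famK K I" shows "valK x K I \<le> (J_norm x)^2"
proof -
  define K' where "K' = {i\<in>K. I i \<noteq> {}}"
  have fin: "finite K'" using F unfolding famK_def K'_def by auto
  obtain h where h: "bij_betw h {0..<card K'} K'" using ex_bij_betw_nat_finite[OF fin] by blast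
  define n where "n = card K'"
  have fN: "famN n (I \<circ> h)"
    unfolding famN_def
  proof (intro conjI allI impI)
    fix i assume "i < n"
    then have "h i \<in> K'" using h unfolding n_def by (simp add: bij_betw_apply)
    then show "nat_interval ((I \<circ> h) i)" using F unfolding K'_def famK_def nat_interval_cvx by auto
  next
    fix i j assume "i < n" "j < n" "i \<noteq> j"
    then have "h i \<in> K'" "h j \<in> K'" "h i \<noteq> h j" using h unfolding n_def
      by (simp_all add: bij_betw_apply) (metis atLeastLessThan_iff bij_betw_imp_inj_on inj_on_contraD zero_le)
    then show "(I \<circ> h) i \<inter> (I \<circ> h) j = {}" using F unfolding K'_def famK_def by auto
  qed
  have "valK x {..<n} (I \<circ> h) = valK x K' I"
    unfolding valK_def n_def lessThan_atLeast0 using sum.reindex_bij_betw[OF h, of "\<lambda>i. (isum x (I i))^2"]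
    by simp
  also have "\<dots> = valK x K I"
    unfolding valK_def K'_def by (rule sum.mono_neutral_left) (use F in \<open>auto simp: famK_def\<close>)
  finally have eq: "valK x {..<n} (I \<circ> h) = valK x K I" .
  have "\<exists>n' I'. sqrt (valK x K I) = sqrt (valK x {..<n'} I') \<and> famN n' I'" using fN eq by metis
  then have "sqrt (valK x K I) \<in> J_vals x" unfolding J_vals_eq by blast
  then have "sqrt (valK x K I) \<le> J_norm x" unfolding J_norm_def using J_bdd[OF x] by (meson cSup_upper)
  moreover have "0 \<le> valK x K I" unfolding valK_def by (simp add: sum_nonneg)
  ultimately have "(sqrt (valK x K I))^2 \<le> (J_norm x)^2" by (intro power_mono) auto
  then show ?thesis using \<open>0 \<le> valK x K I\<close> by simp
qed



lemma J_vals_ne: "J_vals x \<noteq> {}"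
proof -
  have "famN 0 I" for I by (simp add: famN_def)
  then have "\<exists>n' I'. sqrt (valK x {..<0} (\<lambda>_. {})) = sqrt (valK x {..<n'} I') \<and> famN n' I'"
    by (intro exI[of _ 0] exI[of _ "\<lambda>_. {}"]) (simp add: famN_def valK_def)
  then have "sqrt (valK x {..<0} (\<lambda>_. {})) \<in> J_vals x" unfolding J_vals_eq by blast
  then show ?thesis by blast
qed

lemma J_approx: assumes x: "x \<in> J_space" and e: "e > 0"
  shows "\<exists>n I. famN n I \<and> valK x {..<n} I > (J_norm x)^2 - e"
proof (cases "(J_norm x)^2 - e < 0")
  case True
  have "famN 0 I" for I by (simp add: famN_def)
  then show ?thesis using True by (intro exI[of _ 0] exI[of _ "\<lambda>_. {}"]) (auto simp: valK_def)
next
  case False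
  have J0: "0 \<le> J_norm x" by (rule J_nonneg[OF x])
  have "sqrt ((J_norm x)^2 - e) < sqrt ((J_norm x)^2)" using e False by (intro real_sqrt_less_mono) simp
  then have "sqrt ((J_norm x)^2 - e) < J_norm x" using J0 by simp
  then obtain r where r: "r \<in> J_vals x" "sqrt ((J_norm x)^2 - e) < r"
    unfolding J_norm_def using less_cSupE J_vals_ne by metis
  then obtain n I where nI: "famN n I" "r = sqrt (valK x {..<n} I)" unfolding J_vals_eq by blast
  have v0: "0 \<le> valK x {..<n} I" unfolding valK_def by (simp add: sum_nonneg)
  have "sqrt ((J_norm x)^2 - e) < sqrt (valK x {..<n} I)" using r nI by simp
  then have "(J_norm x)^2 - e < valK x {..<n} I" using real_sqrt_less_iff by blast
  then show ?thesis using nI by blast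
qed

lemma abs_isum_le: assumes x: "x \<in> J_space" and A: "cvx A" shows "\<bar>isum x A\<bar> \<le> J_norm x"
proof -
  have "famK {()} (\<lambda>_. A)" using A by (simp add: famK_def)
  from fam_le[OF x this] have "(isum x A)^2 \<le> (J_norm x)^2" by (simp add: valK_def)
  then show ?thesis using J_nonneg[OF x] power2_le_iff_abs_le by blast
qed

lemma fam_union:
  assumes F1: "famK K1 I1" and F2: "famK K2 I2" and D: "\<And>i j. i \<in> K1 \<Longrightarrow> j \<in> K2 \<Longrightarrow> I1 i \<inter> I2 j = {}"
  shows "famK (Inl ` K1 \<union> Inr ` K2) (case_sum I1 I2)"
    "valK x (Inl ` K1 \<union> Inr ` K2) (case_sum I1 I2) = valK x K1 I1 + valK x K2 I2"
proof -
  show "famK (Inl ` K1 \<union> Inr ` K2) (case_sum I1 I2)"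
    unfolding famK_def
  proof (intro conjI ballI impI)
    show "finite (Inl ` K1 \<union> Inr ` K2)" using F1 F2 by (simp add: famK_def)
  next
    fix i assume "i \<in> Inl ` K1 \<union> Inr ` K2"
    then show "cvx (case_sum I1 I2 i)" using F1 F2 by (auto simp: famK_def)
  next
    fix i j assume ij: "i \<in> Inl ` K1 \<union> Inr ` K2" "j \<in> Inl ` K1 \<union> Inr ` K2" "i \<noteq> j"
    show "case_sum I1 I2 i \<inter> case_sum I1 I2 j = {}"
    proof (cases i)
      case (Inl a) note ia = this
      show ?thesis
      proof (cases j)
        case (Inl b) then show ?thesis using ia ij F1 unfolding famK_def by auto
      next
        case (Inr b) then show ?thesis using ia ij D by auto
      qed
    next
      case (Inr a) note ia = this
      show ?thesis
      proof (cases j)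
        case (Inl b) then show ?thesis using ia ij D by auto
      next
        case (Inr b) then show ?thesis using ia ij F2 unfolding famK_def by auto
      qed
    qed
  qed
  have fin: "finite K1" "finite K2" using F1 F2 by (auto simp: famK_def)
  have "valK x (Inl ` K1 \<union> Inr ` K2) (case_sum I1 I2) =
      (\<Sum>i\<in>Inl ` K1. (isum x (case_sum I1 I2 i))^2) + (\<Sum>i\<in>Inr ` K2. (isum x (case_sum I1 I2 i))^2)"
    unfolding valK_def by (rule sum.union_disjoint) (use fin in auto)
  also have "\<dots> = valK x K1 I1 + valK x K2 I2"
    unfolding valK_def by (simp add: sum.reindex)
  finally show "valK x (Inl ` K1 \<union> Inr ` K2) (case_sum I1 I2) = valK x K1 I1 + valK x K2 I2" .
qed

lemma fam_add:
  assumes F: "famK K I" and P: "cvx P" and D: "\<And>i. i \<in> K \<Longrightarrow> I i \<inter> P = {}"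
  shows "famK (insert None (Some ` K)) (case_option P I)"
    "valK x (insert None (Some ` K)) (case_option P I) = valK x K I + (isum x P)^2"
proof -
  show "famK (insert None (Some ` K)) (case_option P I)"
    unfolding famK_def
  proof (intro conjI ballI impI)
    show "finite (insert None (Some ` K))" using F by (simp add: famK_def)
  next
    fix i assume "i \<in> insert None (Some ` K)"
    then show "cvx (case_option P I i)" using F P by (auto simp: famK_def)
  next
    fix i j assume ij: "i \<in> insert None (Some ` K)" "j \<in> insert None (Some ` K)" "i \<noteq> j"
    show "case_option P I i \<inter> case_option P I j = {}"
    proof (cases i)
      case None note ia = this
      show ?thesis
      proof (cases j)
        case None then show ?thesis using ia ij by auto
      next
        case (Some b) then show ?thesis using ia ij D by auto
      qed
    next
      case (Some a) note ia = this
      show ?thesis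
      proof (cases j)
        case None then show ?thesis using ia ij D by auto
      next
        case (Some b) then show ?thesis using ia ij F unfolding famK_def by auto
      qed
    qed
  qed
  have fin: "finite K" using F by (auto simp: famK_def)
  have "valK x (insert None (Some ` K)) (case_option P I) = (isum x P)^2 + (\<Sum>i\<in>Some ` K. (isum x (case_option P I i))^2)"
    unfolding valK_def by (subst sum.insert) (use fin in auto)
  also have "\<dots> = (isum x P)^2 + valK x K I"
    unfolding valK_def by (simp add: sum.reindex)
  finally show "valK x (insert None (Some ` K)) (case_option P I) = valK x K I + (isum x P)^2" by simp
qed

lemma fam_add2:
  assumes x: "x \<in> J_space" and F: "famK K I" and P: "cvx P" and Q: "cvx Q" and PQ: "P \<inter> Q = {}"
    and D: "\<And>i. i \<in> K \<Longrightarrow> I i \<inter> P = {}" "\<And>i. i \<in> K \<Longrightarrow> I i \<inter> Q = {}"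
  shows "valK x K I + (isum x P)^2 + (isum x Q)^2 \<le> (J_norm x)^2"
proof -
  have A1f: "famK (insert None (Some ` K)) (case_option P I)"
    by (rule fam_add(1)) (use F P D in auto)
  have A1v: "valK x (insert None (Some ` K)) (case_option P I) = valK x K I + (isum x P)^2"
    by (rule fam_add(2)) (use F P D in auto)
  have D2: "case_option P I i \<inter> Q = {}" if "i \<in> insert None (Some ` K)" for i
  proof (cases i)
    case None then show ?thesis using PQ by simp
  next
    case (Some j) then have "j \<in> K" using that by auto
    then show ?thesis using D(2) Some by simp
  qed
  have A2f: "famK (insert None (Some ` (insert None (Some ` K)))) (case_option Q (case_option P I))"
    by (rule fam_add(1)) (use A1f Q D2 in auto)
  have A2v: "valK x (insert None (Some ` (insert None (Some ` K)))) (case_option Q (case_option P I))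
     = valK x (insert None (Some ` K)) (case_option P I) + (isum x Q)^2"
    by (rule fam_add(2)) (use A1f Q D2 in auto)
  show ?thesis using fam_le[OF x A2f] A2v A1v by linarith
qed

lemma card_disj: assumes F: "famK K I" shows "card {i\<in>K. p \<in> I i} \<le> 1"
proof -
  have fin: "finite {i\<in>K. p \<in> I i}" using F by (simp add: famK_def)
  have "\<forall>a1\<in>{i\<in>K. p \<in> I i}. \<forall>a2\<in>{i\<in>K. p \<in> I i}. a1 = a2"
    using F unfolding famK_def by blast
  then show ?thesis using card_le_Suc0_iff_eq[OF fin] by simp
qed

lemma val_perturb:
  fixes t t' :: "'i \<Rightarrow> real"
  assumes fin: "finite K" and d: "\<And>i. i \<in> K \<Longrightarrow> \<bar>t' i - t i\<bar> \<le> \<delta>"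
    and R: "\<And>i. i \<in> K \<Longrightarrow> \<bar>t i\<bar> \<le> R" and c: "card {i\<in>K. t' i \<noteq> t i} \<le> 1" and d0: "0 \<le> \<delta>" and R0: "0 \<le> R"
  shows "(\<Sum>i\<in>K. (t' i)^2) \<le> (\<Sum>i\<in>K. (t i)^2) + 2*\<delta>*R + \<delta>^2"
proof -
  define D where "D = {i\<in>K. t' i \<noteq> t i}"
  have finD: "finite D" using fin by (simp add: D_def)
  have "(\<Sum>i\<in>K. (t' i)^2) - (\<Sum>i\<in>K. (t i)^2) = (\<Sum>i\<in>K. (t' i)^2 - (t i)^2)"
    by (simp add: sum_subtractf)
  also have "\<dots> = (\<Sum>i\<in>D. (t' i)^2 - (t i)^2)"
    by (rule sum.mono_neutral_right) (use fin in \<open>auto simp: D_def\<close>)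
  also have "\<dots> \<le> 2*\<delta>*R + \<delta>^2"
  proof (cases "D = {}")
    case True
    then show ?thesis using d0 R0 by simp
  next
    case False
    then obtain j where j: "j \<in> D" by blast
    have "\<forall>a1\<in>D. \<forall>a2\<in>D. a1 = a2" using c card_le_Suc0_iff_eq[OF finD] unfolding D_def by simp
    then have Dj: "D = {j}" using j by blast
    have jK: "j \<in> K" using j by (simp add: D_def)
    have a: "\<bar>t' j\<bar> \<le> \<bar>t j\<bar> + \<delta>" using d[OF jK] by linarith
    have "(t' j)^2 = \<bar>t' j\<bar>^2" by simp
    also have "\<dots> \<le> (\<bar>t j\<bar> + \<delta>)^2" using a by (intro power_mono) auto
    finally have b: "(t' j)^2 \<le> (\<bar>t j\<bar> + \<delta>)^2" .
    have "(\<bar>t j\<bar> + \<delta>)^2 = (t j)^2 + 2*\<delta>*\<bar>t j\<bar> + \<delta>^2" by (simp add: power2_eq_square algebra_simps)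
    moreover have "2*\<delta>*\<bar>t j\<bar> \<le> 2*\<delta>*R" using R[OF jK] d0 by (intro mult_left_mono) auto
    ultimately show ?thesis using b Dj by simp
  qed
  finally show ?thesis by simp
qed



lemma isum_pert:
  assumes sx: "summable (restr x A)" and F: "finite F" and d: "\<And>n. n \<notin> F \<Longrightarrow> d n = 0"
  shows "summable (restr (\<lambda>n. x n + d n) A)"
    "isum (\<lambda>n. x n + d n) A = isum x A + (\<Sum>n\<in>F. restr d A n)"
proof -
  have sd: "summable (restr d A)" by (rule summable_finite[OF F]) (use d in \<open>auto simp: restr_def\<close>)
  have eq: "restr (\<lambda>n. x n + d n) A = (\<lambda>n. restr x A n + restr d A n)" by (auto simp: restr_def fun_eq_iff)
  show "summable (restr (\<lambda>n. x n + d n) A)" unfolding eq using sx sd by (rule summable_add)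
  have "suminf (restr d A) = (\<Sum>n\<in>F. restr d A n)" by (rule suminf_finite[OF F]) (use d in \<open>auto simp: restr_def\<close>)
  then show "isum (\<lambda>n. x n + d n) A = isum x A + (\<Sum>n\<in>F. restr d A n)"
    unfolding isum_def eq using suminf_add[OF sx sd] by simp
qed

lemma in_BJ:
  assumes s: "\<And>A. nat_interval A \<Longrightarrow> summable (restr y A)"
    and v: "\<And>n I. famN n I \<Longrightarrow> valK y {..<n} I \<le> 1"
  shows "y \<in> B_J"
proof -
  have le: "r \<le> 1" if rin: "r \<in> J_vals y" for r
  proof -
    obtain n I where "famN n I" "r = sqrt (valK y {..<n} I)" using rin unfolding J_vals_eq by blast
    then show ?thesis using v by simp
  qed
  then have "bdd_above (J_vals y)" by (meson bdd_aboveI)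
  moreover have "J_norm y \<le> 1" unfolding J_norm_def using J_vals_ne le by (meson cSup_least)
  ultimately show ?thesis using s unfolding B_J_def J_space_def by blast
qed

lemma famK_subset: "famK K I \<Longrightarrow> K' \<subseteq> K \<Longrightarrow> famK K' I"
  unfolding famK_def by (meson finite_subset subsetD)

lemma cvx_both:
  assumes "cvx A" "a \<in> A" "c \<in> A" "a \<le> b" "b \<le> c" shows "b \<in> A"
  using assms unfolding cvx_def by blast

lemma E_core:
  fixes s \<delta> e :: real and N :: nat
  assumes x: "x \<in> J_space" and J1: "J_norm x \<le> 1" and N: "N \<noteq> 0" and dpos: "\<delta> > 0"
    and de: "4*\<delta>*J_norm x + 2*\<delta>^2 \<le> e" and s: "\<bar>s\<bar> = 1"
    and H: "\<And>K1 I1 K2 I2. famK (K1::nat set) (I1::nat\<Rightarrow>nat set) \<Longrightarrow> (\<forall>i\<in>K1. I1 i \<subseteq> {..<N}) \<Longrightarrow>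
             famK (K2::nat set) (I2::nat\<Rightarrow>nat set) \<Longrightarrow> (\<forall>i\<in>K2. I2 i \<subseteq> {N..}) \<Longrightarrow>
             valK x K1 I1 + valK x K2 I2 \<le> (J_norm x)^2 - e"
  defines "d \<equiv> (\<lambda>n. if n = N - 1 then \<delta> else if n = N then - \<delta> else 0)"
  shows "(\<lambda>n. x n + s * d n) \<in> B_J"
proof -
  define y where "y = (\<lambda>n. x n + s * d n)"
  define J where "J = J_norm x"
  have J0: "0 \<le> J" using J_nonneg[OF x] by (simp add: J_def)
  have NN: "N - 1 \<noteq> N" using N by simp
  have F: "finite {N - 1, N}" by simp
  have dz: "\<And>n. n \<notin> {N - 1, N} \<Longrightarrow> s * d n = 0" by (simp add: d_def)
  have isy: "summable (restr y A) \<and> isum y A = isum x A + ((if N - 1 \<in> A then s*\<delta> else 0) - (if N \<in> A then s*\<delta> else 0))"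
    if "cvx A" for A
  proof -
    have sx: "summable (restr x A)" by (rule summable_restr[OF x that])
    note P = isum_pert[OF sx F dz]
    have "(\<Sum>n\<in>{N - 1, N}. restr (\<lambda>n. s * d n) A n) = restr (\<lambda>n. s * d n) A (N - 1) + restr (\<lambda>n. s * d n) A N"
      using NN by simp
    also have "\<dots> = (if N - 1 \<in> A then s*\<delta> else 0) - (if N \<in> A then s*\<delta> else 0)"
      using NN by (simp add: restr_def d_def)
    finally show ?thesis using P unfolding y_def by simp
  qed
  show ?thesis
    unfolding y_def[symmetric]
  proof (rule in_BJ)
    fix A assume "nat_interval A"
    then show "summable (restr y A)" using isy nat_interval_cvx by blast
  next
    fix n I assume fN: "famN n I"
    have FK: "famK {..<n} I" by (rule famN_famK[OF fN])
    have cv: "cvx (I i)" if "i < n" for i using FK that by (simp add: famK_def)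
    show "valK y {..<n} I \<le> 1"
    proof (cases "\<forall>i<n. (N - 1 \<in> I i \<longleftrightarrow> N \<in> I i)")
      case True
      have "valK y {..<n} I = valK x {..<n} I"
        unfolding valK_def
      proof (rule sum.cong[OF refl])
        fix i assume "i \<in> {..<n}"
        then have "i < n" by simp
        then show "(isum y (I i))^2 = (isum x (I i))^2" using isy[OF cv[OF \<open>i<n\<close>]] True by auto
      qed
      also have "\<dots> \<le> J^2" using fam_le[OF x FK] by (simp add: J_def)
      also have "\<dots> \<le> 1" using J1 J0 by (simp add: J_def power_le_one)
      finally show ?thesis .
    next
      case False
      then obtain i0 where i0: "i0 < n" "(N - 1 \<in> I i0) \<noteq> (N \<in> I i0)" by blast
      have notboth: "\<not> (N - 1 \<in> I i \<and> N \<in> I i)" if "i < n" for i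
      proof (cases "i = i0")
        case True then show ?thesis using i0 by blast
      next
        case False
        then have "I i \<inter> I i0 = {}" using FK that i0(1) unfolding famK_def by auto
        then show ?thesis using i0(2) by blast
      qed
      define KL where "KL = {i\<in>{..<n}. I i \<subseteq> {..<N}}"
      define KR where "KR = {i\<in>{..<n}. \<not> I i \<subseteq> {..<N}}"
      have KR_sub: "I i \<subseteq> {N..}" if "i \<in> KR" for i
      proof
        fix k assume k: "k \<in> I i"
        from that have "\<not> I i \<subseteq> {..<N}" by (simp add: KR_def)
        then obtain m where m0: "m \<in> I i" "\<not> m < N" by (auto simp: subset_iff)
        then have m: "m \<in> I i" "N \<le> m" by auto
        have iN: "i < n" using that by (simp add: KR_def)
        show "k \<in> {N..}"
        proof (rule ccontr)
          assume "k \<notin> {N..}"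
          then have kN: "k \<le> N - 1" by simp
          have "N - 1 \<in> I i" by (rule cvx_both[OF cv[OF iN] k m(1)]) (use kN m N in auto)
          moreover have "N \<in> I i" by (rule cvx_both[OF cv[OF iN] k m(1)]) (use kN m N in auto)
          ultimately show False using notboth[OF iN] by blast
        qed
      qed
      have FL: "famK KL I" by (rule famK_subset[OF FK]) (auto simp: KL_def)
      have FR: "famK KR I" by (rule famK_subset[OF FK]) (auto simp: KR_def)
      have HLR: "valK x KL I + valK x KR I \<le> J^2 - e"
        using H[OF FL _ FR] KR_sub unfolding J_def by (auto simp: KL_def)
      have diff: "\<bar>isum y (I i) - isum x (I i)\<bar> \<le> \<delta>" if "i < n" for i
        using isy[OF cv[OF that]] notboth[OF that] s dpos by (auto simp: abs_mult)
      have bnd: "\<bar>isum x (I i)\<bar> \<le> J" if "i < n" for i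
        using abs_isum_le[OF x cv[OF that]] by (simp add: J_def)
      have vL: "valK y KL I \<le> valK x KL I + 2*\<delta>*J + \<delta>^2"
        unfolding valK_def
      proof (rule val_perturb[where t = "\<lambda>i. isum x (I i)" and t' = "\<lambda>i. isum y (I i)"])
        show "finite KL" by (simp add: KL_def)
        show "0 \<le> \<delta>" using dpos by simp
        show "0 \<le> J" by (rule J0)
        show "\<bar>isum y (I i) - isum x (I i)\<bar> \<le> \<delta>" if "i \<in> KL" for i using diff that by (simp add: KL_def)
        show "\<bar>isum x (I i)\<bar> \<le> J" if "i \<in> KL" for i using bnd that by (simp add: KL_def)
        have sub: "{i\<in>KL. isum y (I i) \<noteq> isum x (I i)} \<subseteq> {i\<in>{..<n}. N - 1 \<in> I i}"
        proof
          fix i assume "i \<in> {i\<in>KL. isum y (I i) \<noteq> isum x (I i)}"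
          then have a: "i \<in> KL" "isum y (I i) \<noteq> isum x (I i)" by auto
          then have "i < n" "N \<notin> I i" by (auto simp: KL_def)
          then show "i \<in> {i\<in>{..<n}. N - 1 \<in> I i}" using a(2) isy[OF cv[OF \<open>i<n\<close>]] by (auto split: if_splits)
        qed
        show "card {i\<in>KL. isum y (I i) \<noteq> isum x (I i)} \<le> 1"
        proof -
          have "card {i\<in>KL. isum y (I i) \<noteq> isum x (I i)} \<le> card {i\<in>{..<n}. N - 1 \<in> I i}"
            by (rule card_mono[OF _ sub]) simp
          also have "\<dots> \<le> 1" by (rule card_disj[OF FK])
          finally show ?thesis .
        qed
      qed
      have vR: "valK y KR I \<le> valK x KR I + 2*\<delta>*J + \<delta>^2"
        unfolding valK_def
      proof (rule val_perturb[where t = "\<lambda>i. isum x (I i)" and t' = "\<lambda>i. isum y (I i)"])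
        show "finite KR" by (simp add: KR_def)
        show "0 \<le> \<delta>" using dpos by simp
        show "0 \<le> J" by (rule J0)
        show "\<bar>isum y (I i) - isum x (I i)\<bar> \<le> \<delta>" if "i \<in> KR" for i using diff that by (simp add: KR_def)
        show "\<bar>isum x (I i)\<bar> \<le> J" if "i \<in> KR" for i using bnd that by (simp add: KR_def)
        have sub: "{i\<in>KR. isum y (I i) \<noteq> isum x (I i)} \<subseteq> {i\<in>{..<n}. N \<in> I i}"
        proof
          fix i assume "i \<in> {i\<in>KR. isum y (I i) \<noteq> isum x (I i)}"
          then have a: "i \<in> KR" "isum y (I i) \<noteq> isum x (I i)" by auto
          then have "i < n" "N - 1 \<notin> I i" using KR_sub[OF a(1)] N by (auto simp: KR_def)
          then show "i \<in> {i\<in>{..<n}. N \<in> I i}" using a(2) isy[OF cv[OF \<open>i<n\<close>]] by (auto split: if_splits)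
        qed
        show "card {i\<in>KR. isum y (I i) \<noteq> isum x (I i)} \<le> 1"
        proof -
          have "card {i\<in>KR. isum y (I i) \<noteq> isum x (I i)} \<le> card {i\<in>{..<n}. N \<in> I i}"
            by (rule card_mono[OF _ sub]) simp
          also have "\<dots> \<le> 1" by (rule card_disj[OF FK])
          finally show ?thesis .
        qed
      qed
      have U: "{..<n} = KL \<union> KR" by (auto simp: KL_def KR_def)
      have "valK y {..<n} I = valK y KL I + valK y KR I"
        unfolding valK_def U by (rule sum.union_disjoint) (auto simp: KL_def KR_def)
      also have "\<dots> \<le> J^2 - e + 4*\<delta>*J + 2*\<delta>^2" using vL vR HLR by linarith
      also have "\<dots> \<le> J^2" using de unfolding J_def by linarith
      also have "\<dots> \<le> 1" using J1 J0 by (simp add: J_def power_le_one)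
      finally show ?thesis .
    qed
  qed
qed



lemma ext_BJ: "extreme_point_seq x B_J \<Longrightarrow> x \<in> B_J"
  by (simp add: extreme_point_seq_def)

lemma ext_contra:
  assumes ext: "extreme_point_seq x B_J" and a: "(\<lambda>n. x n + d n) \<in> B_J" and b: "(\<lambda>n. x n + (-1) * d n) \<in> B_J"
    and d: "d p \<noteq> 0"
  shows False
proof -
  have ne: "(\<lambda>n. x n + d n) \<noteq> (\<lambda>n. x n + (-1) * d n)"
  proof
    assume "(\<lambda>n. x n + d n) = (\<lambda>n. x n + (-1) * d n)"
    then have "x p + d p = x p + (-1) * d p" by metis
    then show False using d by simp
  qed
  have eq: "x = (\<lambda>n. (1 - 1/2) * (x n + d n) + 1/2 * (x n + (-1) * d n))"
    by (simp add: fun_eq_iff) (simp add: field_simps)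
  have t: "0 < (1/2::real)" "(1/2::real) < 1" by simp_all
  show False using ext a b ne t eq unfolding extreme_point_seq_def by blast
qed

lemma split_approx:
  assumes x: "x \<in> J_space" and ext: "extreme_point_seq x B_J" and e: "e > 0"
  shows "\<exists>K1 I1 K2 I2. famK (K1::nat set) (I1::nat\<Rightarrow>nat set) \<and> (\<forall>i\<in>K1. I1 i \<subseteq> {..<N}) \<and>
           famK (K2::nat set) (I2::nat\<Rightarrow>nat set) \<and> (\<forall>i\<in>K2. I2 i \<subseteq> {N..}) \<and>
           valK x K1 I1 + valK x K2 I2 > (J_norm x)^2 - e"
proof (cases "N = 0")
  case True
  obtain n I where nI: "famN n I" "valK x {..<n} I > (J_norm x)^2 - e" using J_approx[OF x e] by blast
  have f0: "famK {} (\<lambda>_::nat. {})" by (simp add: famK_def)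
  have v0: "valK x {} (\<lambda>_::nat. {}) = 0" by (simp add: valK_def)
  show ?thesis
    by (rule exI[of _ "{}"], rule exI[of _ "\<lambda>_. {}"], rule exI[of _ "{..<n}"], rule exI[of _ I])
       (use f0 v0 nI famN_famK[OF nI(1)] True in auto)
next
  case False
  show ?thesis
  proof (rule ccontr)
    assume nH: "\<not> ?thesis"
    have H: "valK x K1 I1 + valK x K2 I2 \<le> (J_norm x)^2 - e"
      if "famK (K1::nat set) (I1::nat\<Rightarrow>nat set)" "\<forall>i\<in>K1. I1 i \<subseteq> {..<N}"
         "famK (K2::nat set) (I2::nat\<Rightarrow>nat set)" "\<forall>i\<in>K2. I2 i \<subseteq> {N..}" for K1 I1 K2 I2
      using nH that not_less by blast
    have J1: "J_norm x \<le> 1" using ext_BJ[OF ext] by (simp add: B_J_def)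
    have J0: "0 \<le> J_norm x" by (rule J_nonneg[OF x])
    define \<delta> where "\<delta> = min 1 (e / (4 * J_norm x + 2))"
    have den: "4 * J_norm x + 2 > 0" using J0 by simp
    have dpos: "\<delta> > 0" using e den by (simp add: \<delta>_def)
    have d1: "\<delta> \<le> 1" by (simp add: \<delta>_def)
    have d2: "\<delta> * (4 * J_norm x + 2) \<le> e" using den
      by (simp add: \<delta>_def) (metis min.cobounded2 pos_le_divide_eq)
    have "\<delta>^2 \<le> \<delta>" using d1 dpos by (simp add: power2_eq_square mult_left_le)
    then have de: "4*\<delta>*J_norm x + 2*\<delta>^2 \<le> e" using d2 by (simp add: algebra_simps)
    define d where "d = (\<lambda>n. if n = N - 1 then \<delta> else if n = N then - \<delta> else 0)"
    have a: "(\<lambda>n. x n + 1 * d n) \<in> B_J"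
      unfolding d_def by (rule E_core[OF x J1 False dpos de _ H]) simp_all
    have b: "(\<lambda>n. x n + (-1) * d n) \<in> B_J"
      unfolding d_def by (rule E_core[OF x J1 False dpos de _ H]) simp_all
    have "d (N - 1) \<noteq> 0" using dpos by (simp add: d_def)
    then show False using ext_contra[OF ext _ b] a by simp
  qed
qed

lemma J_one:
  assumes x: "x \<in> J_space" and ext: "extreme_point_seq x B_J"
  shows "J_norm x = 1"
proof (rule ccontr)
  assume ne: "J_norm x \<noteq> 1"
  have J1: "J_norm x \<le> 1" using ext_BJ[OF ext] by (simp add: B_J_def)
  have J0: "0 \<le> J_norm x" by (rule J_nonneg[OF x])
  define J where "J = J_norm x"
  define \<delta> where "\<delta> = 1 - J"
  have dpos: "\<delta> > 0" using ne J1 by (simp add: \<delta>_def J_def)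
  define d where "d = (\<lambda>n::nat. if n = 0 then \<delta> else 0)"
  have mem: "(\<lambda>n. x n + s * d n) \<in> B_J" if s: "\<bar>s\<bar> = 1" for s
  proof -
    define y where "y = (\<lambda>n. x n + s * d n)"
    have dz: "\<And>n. n \<notin> {0} \<Longrightarrow> s * d n = 0" by (simp add: d_def)
    have isy: "summable (restr y A) \<and> isum y A = isum x A + (if 0 \<in> A then s*\<delta> else 0)"
      if "cvx A" for A
    proof -
      have sx: "summable (restr x A)" by (rule summable_restr[OF x that])
      have F0: "finite {0::nat}" by simp
      note P = isum_pert[OF sx F0 dz]
      then show ?thesis unfolding y_def by (simp add: restr_def d_def)
    qed
    show ?thesis unfolding y_def[symmetric]
    proof (rule in_BJ)
      fix A assume "nat_interval A"
      then show "summable (restr y A)" using isy nat_interval_cvx by blast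
    next
      fix n I assume fN: "famN n I"
      have FK: "famK {..<n} I" by (rule famN_famK[OF fN])
      have cv: "cvx (I i)" if "i < n" for i using FK that by (simp add: famK_def)
      have "valK y {..<n} I \<le> valK x {..<n} I + 2*\<delta>*J + \<delta>^2"
        unfolding valK_def
      proof (rule val_perturb[where t = "\<lambda>i. isum x (I i)" and t' = "\<lambda>i. isum y (I i)"])
        show "finite {..<n}" by simp
        show "0 \<le> \<delta>" using dpos by simp
        show "0 \<le> J" using J0 by (simp add: J_def)
        show "\<bar>isum y (I i) - isum x (I i)\<bar> \<le> \<delta>" if "i \<in> {..<n}" for i
          using isy[OF cv] that s dpos by (auto simp: abs_mult)
        show "\<bar>isum x (I i)\<bar> \<le> J" if "i \<in> {..<n}" for i
          using abs_isum_le[OF x cv] that by (simp add: J_def)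
        have sub: "{i\<in>{..<n}. isum y (I i) \<noteq> isum x (I i)} \<subseteq> {i\<in>{..<n}. 0 \<in> I i}"
          using isy cv by (auto split: if_splits)
        have "card {i\<in>{..<n}. isum y (I i) \<noteq> isum x (I i)} \<le> card {i\<in>{..<n}. 0 \<in> I i}"
          by (rule card_mono[OF _ sub]) simp
        also have "\<dots> \<le> 1" by (rule card_disj[OF FK])
        finally show "card {i\<in>{..<n}. isum y (I i) \<noteq> isum x (I i)} \<le> 1" .
      qed
      also have "\<dots> \<le> J^2 + 2*\<delta>*J + \<delta>^2" using fam_le[OF x FK] by (simp add: J_def)
      also have "\<dots> = (J + \<delta>)^2" by (simp add: power2_eq_square algebra_simps)
      also have "\<dots> = 1" by (simp add: \<delta>_def)
      finally show "valK y {..<n} I \<le> 1" .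
    qed
  qed
  have "d 0 \<noteq> 0" using dpos by (simp add: d_def)
  then show False using ext_contra[OF ext _ mem[of "-1"]] mem[of 1] by simp
qed



lemma arith4:
  fixes R S u v w :: real
  assumes c1: "R + (u+w+v)^2 \<le> S" and c3: "R + (u+w)^2 + v^2 \<le> S" and c4: "R + u^2 + (w+v)^2 \<le> S"
  shows "R + (u+w)^2 + (w+v)^2 \<le> S + w^2"
proof -
  show ?thesis
  proof (cases "0 \<le> u * v")
    case True
    have "(u+w)^2 + (w+v)^2 = (u+w+v)^2 + w^2 - 2*(u * v)" by (simp add: power2_eq_square algebra_simps)
    then show ?thesis using c1 True by linarith
  next
    case uv: False
    show ?thesis
    proof (cases "w * v \<le> 0")
      case True
      have "(u+w)^2 + (w+v)^2 = (u+w)^2 + v^2 + w^2 + 2*(w * v)" by (simp add: power2_eq_square algebra_simps)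
      then show ?thesis using c3 True by linarith
    next
      case wv: False
      show ?thesis
      proof (cases "w * u \<le> 0")
        case True
        have "(u+w)^2 + (w+v)^2 = u^2 + (w+v)^2 + w^2 + 2*(w * u)" by (simp add: power2_eq_square algebra_simps)
        then show ?thesis using c4 True by linarith
      next
        case wu: False
        have "(w * u)*(w * v) > 0" using wu wv by (simp add: mult_pos_pos)
        moreover have "(w * u)*(w * v) = (w * w)*(u * v)" by (simp add: algebra_simps)
        moreover have "(w * w)*(u * v) \<le> 0" using uv by (simp add: mult_nonneg_nonpos)
        ultimately show ?thesis by linarith
      qed
    qed
  qed
qed

lemma overlap:
  assumes x: "x \<in> J_space" and F1: "famK K1 I1" and S1: "\<forall>i\<in>K1. I1 i \<subseteq> {..N}"
    and F2: "famK K2 I2" and S2: "\<forall>i\<in>K2. I2 i \<subseteq> {N..}"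
  shows "valK x K1 I1 + valK x K2 I2 \<le> (J_norm x)^2 + (x N)^2"
proof (cases "\<exists>i1\<in>K1. N \<in> I1 i1 \<and> (\<exists>i2\<in>K2. N \<in> I2 i2)")
  case False
  have D: "I1 i \<inter> I2 j = {}" if "i \<in> K1" "j \<in> K2" for i j
  proof (rule ccontr)
    assume "I1 i \<inter> I2 j \<noteq> {}"
    then obtain m where m: "m \<in> I1 i" "m \<in> I2 j" by blast
    have "m \<le> N" using S1 that m by auto
    moreover have "N \<le> m" using S2 that m by auto
    ultimately have "m = N" by simp
    then show False using False m that by blast
  qed
  note U = fam_union[OF F1 F2 D]
  have "valK x K1 I1 + valK x K2 I2 \<le> (J_norm x)^2" using fam_le[OF x U(1)] U(2) by simp
  then show ?thesis by (simp add: add_increasing2)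
next
  case True
  then obtain i1 i2 where i1: "i1 \<in> K1" "N \<in> I1 i1" and i2: "i2 \<in> K2" "N \<in> I2 i2" by blast
  have cv1: "cvx (I1 i)" if "i \<in> K1" for i using F1 that by (simp add: famK_def)
  have cv2: "cvx (I2 i)" if "i \<in> K2" for i using F2 that by (simp add: famK_def)
  have dj1: "I1 i \<inter> I1 j = {}" if "i \<in> K1" "j \<in> K1" "i \<noteq> j" for i j using F1 that by (simp add: famK_def)
  have dj2: "I2 i \<inter> I2 j = {}" if "i \<in> K2" "j \<in> K2" "i \<noteq> j" for i j using F2 that by (simp add: famK_def)
  define U where "U = I1 i1 \<inter> {..<N}"
  define V where "V = I2 i2 \<inter> {Suc N..}"
  have eq1: "I1 i1 = U \<union> {N}"
  proof -
    have "I1 i1 \<subseteq> {..N}" using S1 i1(1) by blast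
    then show ?thesis using i1(2) unfolding U_def by fastforce
  qed
  have eq2: "I2 i2 = {N} \<union> V"
  proof -
    have "I2 i2 \<subseteq> {N..}" using S2 i2(1) by blast
    then show ?thesis using i2(2) unfolding V_def by fastforce
  qed
  have cU: "cvx U" unfolding U_def by (rule cvx_Int[OF cv1[OF i1(1)]]) simp
  have cV: "cvx V" unfolding V_def by (rule cvx_Int[OF cv2[OF i2(1)]]) simp
  have sU: "summable (restr x U)" by (rule summable_restr[OF x cU])
  have sV: "summable (restr x V)" by (rule summable_restr[OF x cV])
  have sN: "summable (restr x {N})" by (rule summable_restr[OF x]) simp
  have sI1: "summable (restr x (I1 i1))" by (rule summable_restr[OF x cv1[OF i1(1)]])
  define u where "u = isum x U"
  define v where "v = isum x V"
  define w where "w = x N"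
  have is1: "isum x (I1 i1) = u + w" unfolding eq1 u_def w_def
    by (subst isum_Un) (use sU sN in \<open>auto simp: U_def\<close>)
  have is2: "isum x (I2 i2) = w + v" unfolding eq2 v_def w_def
    by (subst isum_Un) (use sV sN in \<open>auto simp: V_def\<close>)
  have sub1: "I1 i1 \<subseteq> {..N}" using S1 i1(1) by blast
  have is12: "isum x (I1 i1 \<union> V) = u + w + v" using is1
    by (subst isum_Un) (use sI1 sV sub1 in \<open>auto simp: V_def v_def\<close>)
  have W: "I1 i1 \<union> I2 i2 = I1 i1 \<union> V" using eq2 i1 by auto
  have cW: "cvx (I1 i1 \<union> V)" unfolding W[symmetric] by (rule cvx_Un[OF cv1[OF i1(1)] cv2[OF i2(1)] i1(2) i2(2)])
  define K1' where "K1' = K1 - {i1}"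
  define K2' where "K2' = K2 - {i2}"
  have F1': "famK K1' I1" by (rule famK_subset[OF F1]) (auto simp: K1'_def)
  have F2': "famK K2' I2" by (rule famK_subset[OF F2]) (auto simp: K2'_def)
  have N1: "N \<notin> I1 i" if "i \<in> K1'" for i using dj1[of i i1] that i1 by (auto simp: K1'_def)
  have N2: "N \<notin> I2 i" if "i \<in> K2'" for i using dj2[of i i2] that i2 by (auto simp: K2'_def)
  have L1: "I1 i \<subseteq> {..<N}" if "i \<in> K1'" for i
  proof
    fix k assume k: "k \<in> I1 i"
    have "I1 i \<subseteq> {..N}" using S1 that unfolding K1'_def by blast
    then have "k \<le> N" using k by blast
    moreover have "k \<noteq> N" using N1[OF that] k by blast
    ultimately show "k \<in> {..<N}" by simp
  qed
  have L2: "I2 i \<subseteq> {Suc N..}" if "i \<in> K2'" for i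
  proof
    fix k assume k: "k \<in> I2 i"
    have "I2 i \<subseteq> {N..}" using S2 that unfolding K2'_def by blast
    then have "N \<le> k" using k by blast
    moreover have "k \<noteq> N" using N2[OF that] k by blast
    ultimately show "k \<in> {Suc N..}" by simp
  qed
  have D: "I1 i \<inter> I2 j = {}" if "i \<in> K1'" "j \<in> K2'" for i j
  proof -
    have "{..<N} \<inter> {Suc N..} = ({}::nat set)" by auto
    then show ?thesis using L1[OF that(1)] L2[OF that(2)] by blast
  qed
  note R = fam_union[OF F1' F2' D]
  define RK where "RK = Inl ` K1' \<union> Inr ` K2'"
  define RI where "RI = case_sum I1 I2"
  have FR: "famK RK RI" using R(1) by (simp add: RK_def RI_def)
  have vR: "valK x RK RI = valK x K1' I1 + valK x K2' I2" using R(2) by (simp add: RK_def RI_def)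
  have sub2: "I2 i2 \<subseteq> {N..}" using S2 i2(1) by blast
  have DR1: "RI k \<inter> I1 i1 = {}" if kR: "k \<in> RK" for k
  proof -
    consider i where "k = Inl i" "i \<in> K1'" | j where "k = Inr j" "j \<in> K2'" using kR unfolding RK_def by blast
    then show ?thesis
    proof cases
      case 1 then show ?thesis using dj1[of i i1] i1(1) by (simp add: RI_def K1'_def)
    next
      case 2
      have "{Suc N..} \<inter> {..N} = ({}::nat set)" by auto
      then show ?thesis using 2 L2[OF 2(2)] sub1 by (auto simp: RI_def)
    qed
  qed
  have DR2: "RI k \<inter> I2 i2 = {}" if kR: "k \<in> RK" for k
  proof -
    consider i where "k = Inl i" "i \<in> K1'" | j where "k = Inr j" "j \<in> K2'" using kR unfolding RK_def by blast
    then show ?thesis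
    proof cases
      case 2 then show ?thesis using dj2[of j i2] i2(1) by (simp add: RI_def K2'_def)
    next
      case 1
      have "{..<N} \<inter> {N..} = ({}::nat set)" by auto
      then show ?thesis using 1 L1[OF 1(2)] sub2 by (auto simp: RI_def)
    qed
  qed
  have DRU: "RI k \<inter> U = {}" if "k \<in> RK" for k using DR1[OF that] eq1 by auto
  have DRV: "RI k \<inter> V = {}" if "k \<in> RK" for k using DR2[OF that] eq2 by auto
  have DRW: "RI k \<inter> (I1 i1 \<union> V) = {}" if "k \<in> RK" for k using DR1[OF that] DRV[OF that] by auto
  have C1: "valK x RK RI + (u+w+v)^2 + (isum x {})^2 \<le> (J_norm x)^2"
    using fam_add2[OF x FR cW cvx_empty _ DRW] is12 by simp
  have C3: "valK x RK RI + (u+w)^2 + v^2 \<le> (J_norm x)^2"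
    using fam_add2[OF x FR cv1[OF i1(1)] cV _ DR1 DRV] is1 S1 i1(1) unfolding v_def V_def by fastforce
  have C4: "valK x RK RI + u^2 + (w+v)^2 \<le> (J_norm x)^2"
    using fam_add2[OF x FR cU cv2[OF i2(1)] _ DRU DR2] is2 S2 i2(1) unfolding u_def U_def by fastforce
  have v1: "valK x K1 I1 = valK x K1' I1 + (u+w)^2"
    unfolding valK_def K1'_def using F1 i1 is1 by (simp add: famK_def sum.remove)
  have v2: "valK x K2 I2 = valK x K2' I2 + (w+v)^2"
    unfolding valK_def K2'_def using F2 i2 is2 by (simp add: famK_def sum.remove)
  have "valK x RK RI + (u+w)^2 + (w+v)^2 \<le> (J_norm x)^2 + w^2"
    by (rule arith4) (use C1 C3 C4 in simp_all)
  then show ?thesis using v1 v2 vR by (simp add: w_def)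
qed



lemma A_bound:
  assumes x: "x \<in> J_space" and ext: "extreme_point_seq x B_J"
  shows "famK K (I::nat\<Rightarrow>nat set) \<Longrightarrow> (\<forall>i\<in>K. I i \<subseteq> {..<N}) \<Longrightarrow> valK x K I \<le> (\<Sum>k<N. (x k)^2)"
proof (induction N arbitrary: K I)
  case 0
  then have "\<forall>i\<in>K. I i = {}" by auto
  then show ?case by (simp add: valK_def)
next
  case (Suc N)
  show ?case
  proof (rule field_le_epsilon)
    fix e :: real assume e: "0 < e"
    obtain K1 I1 K2 I2 where F1: "famK (K1::nat set) (I1::nat\<Rightarrow>nat set)" and S1: "\<forall>i\<in>K1. I1 i \<subseteq> {..<N}"
      and F2: "famK (K2::nat set) (I2::nat\<Rightarrow>nat set)" and S2: "\<forall>i\<in>K2. I2 i \<subseteq> {N..}"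
      and gt: "valK x K1 I1 + valK x K2 I2 > (J_norm x)^2 - e"
      using split_approx[OF x ext e, of N] by blast
    have S: "\<forall>i\<in>K. I i \<subseteq> {..N}" using Suc.prems(2) by (simp add: lessThan_Suc_atMost)
    have ov: "valK x K I + valK x K2 I2 \<le> (J_norm x)^2 + (x N)^2" by (rule overlap[OF x Suc.prems(1) S F2 S2])
    have ih: "valK x K1 I1 \<le> (\<Sum>k<N. (x k)^2)" by (rule Suc.IH[OF F1 S1])
    show "valK x K I \<le> (\<Sum>k<Suc N. (x k)^2) + e" using ov ih gt by simp
  qed
qed

lemma l2_le:
  assumes x: "x \<in> J_space"
  shows "summable (\<lambda>k. (x k)^2)" "(\<Sum>k. (x k)^2) \<le> (J_norm x)^2"
proof -
  have b: "(\<Sum>k<M. (x k)^2) \<le> (J_norm x)^2" for M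
  proof -
    have F: "famK {..<M} (\<lambda>k. {k})" by (auto simp: famK_def)
    from fam_le[OF x F] show ?thesis by (simp add: valK_def)
  qed
  show s: "summable (\<lambda>k. (x k)^2)" by (rule summableI_nonneg_bounded[where x = "(J_norm x)^2"]) (use b in auto)
  show "(\<Sum>k. (x k)^2) \<le> (J_norm x)^2" by (rule suminf_le_const[OF s b])
qed

lemma isum_trunc:
  assumes "summable (restr x A)"
  shows "(\<lambda>M. isum x (A \<inter> {..<M})) \<longlonglongrightarrow> isum x A"
proof -
  have eq: "isum x (A \<inter> {..<M}) = (\<Sum>k<M. restr x A k)" for M
  proof -
    have "isum x (A \<inter> {..<M}) = (\<Sum>k\<in>{..<M} \<inter> A. x k)" by (simp add: isum_finite Int_commute)
    also have "\<dots> = (\<Sum>k<M. restr x A k)" by (simp add: sum.inter_restrict restr_def)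
    finally show ?thesis .
  qed
  have "(\<lambda>M. isum x (A \<inter> {..<M})) = (\<lambda>M. \<Sum>k<M. restr x A k)" using eq by simp
  then show ?thesis using summable_LIMSEQ[OF assms] by (simp add: isum_def)
qed

lemma J_le_l2:
  assumes x: "x \<in> J_space" and ext: "extreme_point_seq x B_J"
  shows "(J_norm x)^2 \<le> (\<Sum>k. (x k)^2)"
proof -
  have s: "summable (\<lambda>k. (x k)^2)" by (rule l2_le(1)[OF x])
  have v: "valK x {..<n} I \<le> (\<Sum>k. (x k)^2)" if fN: "famN n I" for n I
  proof -
    have FK: "famK {..<n} I" by (rule famN_famK[OF fN])
    have cv: "cvx (I i)" if "i < n" for i using FK that by (simp add: famK_def)
    have FM: "famK {..<n} (\<lambda>i. I i \<inter> {..<M})" for M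
      using FK unfolding famK_def by (auto intro: cvx_Int)
    have bM: "valK x {..<n} (\<lambda>i. I i \<inter> {..<M}) \<le> (\<Sum>k. (x k)^2)" for M
    proof -
      have "valK x {..<n} (\<lambda>i. I i \<inter> {..<M}) \<le> (\<Sum>k<M. (x k)^2)"
        by (rule A_bound[OF x ext FM]) auto
      also have "\<dots> \<le> (\<Sum>k. (x k)^2)" by (rule sum_le_suminf[OF s]) auto
      finally show ?thesis .
    qed
    have lim: "(\<lambda>M. valK x {..<n} (\<lambda>i. I i \<inter> {..<M})) \<longlonglongrightarrow> valK x {..<n} I"
      unfolding valK_def
    proof (intro tendsto_sum tendsto_power)
      fix i assume "i \<in> {..<n}"
      then show "(\<lambda>M. isum x (I i \<inter> {..<M})) \<longlonglongrightarrow> isum x (I i)"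
        by (intro isum_trunc summable_restr[OF x cv]) simp
    qed
    show ?thesis by (rule LIMSEQ_le_const2[OF lim]) (use bM in auto)
  qed
  have J0: "0 \<le> J_norm x" by (rule J_nonneg[OF x])
  have S0: "0 \<le> (\<Sum>k. (x k)^2)" by (rule suminf_nonneg[OF s]) simp
  have "J_norm x \<le> sqrt (\<Sum>k. (x k)^2)"
    unfolding J_norm_def
  proof (rule cSup_least[OF J_vals_ne])
    fix r assume "r \<in> J_vals x"
    then obtain n I where "famN n I" "r = sqrt (valK x {..<n} I)" unfolding J_vals_eq by blast
    then show "r \<le> sqrt (\<Sum>k. (x k)^2)" using v by simp
  qed
  then have "(J_norm x)^2 \<le> (sqrt (\<Sum>k. (x k)^2))^2" using J0 by (intro power_mono) auto
  then show ?thesis using S0 by simp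
qed

lemma NPR_from:
  assumes x: "x \<in> J_space" and eq: "(J_norm x)^2 \<le> (\<Sum>k. (x k)^2)"
  shows "NPR_hered x"
  unfolding NPR_hered_def
proof (intro allI impI)
  fix I assume I: "nat_interval I"
  define f where "f = (\<lambda>k. (x k)^2)"
  have s: "summable f" unfolding f_def by (rule l2_le(1)[OF x])
  have sI: "summable (restr x I)" using x I by (simp add: J_space_def)
  have sA: "summable (restr f I)"
    by (rule summable_comparison_test'[OF s, where N=0]) (auto simp: restr_def f_def)
  have sB: "summable (restr f (- I))"
    by (rule summable_comparison_test'[OF s, where N=0]) (auto simp: restr_def f_def)
  have cI: "cvx I" using I by (simp add: nat_interval_cvx)
  have bM: "(isum x I)^2 + (\<Sum>k<M. restr f (- I) k) \<le> suminf f" for M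
  proof -
    define K0 where "K0 = {k\<in>{..<M}. k \<notin> I}"
    have F0: "famK K0 (\<lambda>k. {k})" by (auto simp: famK_def K0_def)
    have D0: "\<And>k. k \<in> K0 \<Longrightarrow> {k} \<inter> I = {}" by (auto simp: K0_def)
    note A = fam_add[OF F0 cI D0]
    have "valK x K0 (\<lambda>k. {k}) = (\<Sum>k\<in>{..<M}. if k \<notin> I then (isum x {k})^2 else 0)"
      unfolding valK_def K0_def by (rule sum.inter_filter) simp
    also have "\<dots> = (\<Sum>k<M. restr f (- I) k)" by (intro sum.cong refl) (simp add: restr_def f_def isum_single)
    finally have "valK x K0 (\<lambda>k. {k}) = (\<Sum>k<M. restr f (- I) k)" .
    then show ?thesis using fam_le[OF x A(1)] A(2) eq f_def by simp
  qed
  have lim: "(\<lambda>M. (isum x I)^2 + (\<Sum>k<M. restr f (- I) k)) \<longlonglongrightarrow> (isum x I)^2 + suminf (restr f (- I))"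
    by (intro tendsto_add tendsto_const summable_LIMSEQ[OF sB])
  have le: "(isum x I)^2 + suminf (restr f (- I)) \<le> suminf f"
    by (rule LIMSEQ_le_const2[OF lim]) (use bM in auto)
  have split: "suminf f = suminf (restr f I) + suminf (restr f (- I))"
  proof -
    have "f = (\<lambda>k. restr f I k + restr f (- I) k)" by (auto simp: restr_def fun_eq_iff)
    then show ?thesis using suminf_add[OF sA sB] by metis
  qed
  have main: "(isum x I)^2 \<le> suminf (restr f I)" using le split by simp
  have e1: "\<bar>\<Sum>n. restr x I n\<bar>^2 = (isum x I)^2" by (simp add: isum_def)
  have e2: "(\<lambda>n. \<bar>restr (restr x I) I n\<bar>^2) = restr f I" by (auto simp: restr_def f_def fun_eq_iff)
  have e3: "restr (restr x I) I = restr x I" by (auto simp: restr_def fun_eq_iff)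
  show "NPR (restr x I)" unfolding NPR_def using main e1 e2 e3 by simp
qed



lemma conv:
  assumes x: "x \<in> J_space" and N: "NPR_hered x" and l: "l2_norm x = 1"
  shows "extreme_point_seq x B_J"
proof -
  define f where "f = (\<lambda>k. (x k)^2)"
  have s: "summable f" unfolding f_def by (rule l2_le(1)[OF x])
  have S1: "suminf f = 1" using l by (simp add: l2_norm_def f_def)
  have sA: "summable (restr f A)" for A
    by (rule summable_comparison_test'[OF s, where N=0]) (auto simp: restr_def f_def)
  have npr: "(isum x A)^2 \<le> suminf (restr f A)" if "nat_interval A" for A
  proof -
    have "NPR (restr x A)" using N that by (simp add: NPR_hered_def)
    moreover have "(\<lambda>n. \<bar>restr x A n\<bar>^2) = restr f A" by (auto simp: restr_def f_def fun_eq_iff)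
    ultimately show ?thesis by (simp add: NPR_def isum_def)
  qed
  have J1: "J_norm x \<le> 1"
    unfolding J_norm_def
  proof (rule cSup_least[OF J_vals_ne])
    fix r assume "r \<in> J_vals x"
    then obtain n I where nI: "famN n I" "r = sqrt (valK x {..<n} I)" unfolding J_vals_eq by blast
    have ni: "nat_interval (I i)" if "i < n" for i using nI(1) that by (simp add: famN_def)
    have FK: "famK {..<n} I" by (rule famN_famK[OF nI(1)])
    have "valK x {..<n} I \<le> (\<Sum>i<n. suminf (restr f (I i)))"
      unfolding valK_def by (rule sum_mono) (use npr ni in auto)
    also have "\<dots> = (\<Sum>k. \<Sum>i<n. restr f (I i) k)" by (rule suminf_sum[symmetric]) (rule sA)
    also have "\<dots> \<le> suminf f"
    proof (rule suminf_le)
      show "summable (\<lambda>k. \<Sum>i<n. restr f (I i) k)" by (rule summable_sum) (rule sA)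
      show "summable f" by (rule s)
      fix k
      have "(\<Sum>i<n. restr f (I i) k) = (\<Sum>i\<in>{..<n}. if k \<in> I i then f k else 0)"
        by (simp add: restr_def)
      also have "\<dots> = (\<Sum>i\<in>{i\<in>{..<n}. k \<in> I i}. f k)"
        by (rule sum.inter_filter[symmetric]) simp
      also have "\<dots> = real (card {i\<in>{..<n}. k \<in> I i}) * f k" by simp
      also have "\<dots> \<le> 1 * f k"
        using card_disj[OF FK, of k] by (intro mult_right_mono) (auto simp: f_def)
      finally show "(\<Sum>i<n. restr f (I i) k) \<le> f k" by simp
    qed
    finally have "valK x {..<n} I \<le> 1" using S1 by simp
    then show "r \<le> 1" using nI(2) by simp
  qed
  have xB: "x \<in> B_J" using x J1 by (simp add: B_J_def)
  show ?thesis
    unfolding extreme_point_seq_def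
  proof (intro conjI xB ballI allI impI)
    fix a b and t :: real assume a: "a \<in> B_J" and b: "b \<in> B_J" and h: "a \<noteq> b \<and> 0 < t \<and> t < 1"
    show "x \<noteq> (\<lambda>n. (1 - t) * a n + t * b n)"
    proof
      assume xe: "x = (\<lambda>n. (1 - t) * a n + t * b n)"
      have aJ: "a \<in> J_space" "J_norm a \<le> 1" using a by (auto simp: B_J_def)
      have bJ: "b \<in> J_space" "J_norm b \<le> 1" using b by (auto simp: B_J_def)
      have sa: "summable (\<lambda>k. (a k)^2)" by (rule l2_le(1)[OF aJ(1)])
      have sb: "summable (\<lambda>k. (b k)^2)" by (rule l2_le(1)[OF bJ(1)])
      have Ja: "(\<Sum>k. (a k)^2) \<le> 1"
      proof -
        have "(J_norm a)^2 \<le> 1" using aJ(2) J_nonneg[OF aJ(1)] by (simp add: power_le_one)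
        then show ?thesis using l2_le(2)[OF aJ(1)] by linarith
      qed
      have Jb: "(\<Sum>k. (b k)^2) \<le> 1"
      proof -
        have "(J_norm b)^2 \<le> 1" using bJ(2) J_nonneg[OF bJ(1)] by (simp add: power_le_one)
        then show ?thesis using l2_le(2)[OF bJ(1)] by linarith
      qed
      define g where "g = (\<lambda>k. (1 - t) * (a k)^2 + t * (b k)^2 - f k)"
      have gid: "g k = t * (1 - t) * (a k - b k)^2" for k
        unfolding g_def f_def xe by (simp add: power2_eq_square algebra_simps)
      have g0: "0 \<le> g k" for k unfolding gid using h by simp
      have sg: "summable g" unfolding g_def
        by (intro summable_diff summable_add summable_mult sa sb s)
      have s1: "summable (\<lambda>k. (1 - t) * (a k)^2)" by (rule summable_mult[OF sa])
      have s2: "summable (\<lambda>k. t * (b k)^2)" by (rule summable_mult[OF sb])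
      have "suminf g = (\<Sum>k. (1 - t) * (a k)^2 + t * (b k)^2) - suminf f"
        unfolding g_def by (rule suminf_diff[OF summable_add[OF s1 s2] s, symmetric])
      also have "\<dots> = (\<Sum>k. (1 - t) * (a k)^2) + (\<Sum>k. t * (b k)^2) - suminf f"
        using suminf_add[OF s1 s2] by simp
      also have "\<dots> = (1 - t) * (\<Sum>k. (a k)^2) + t * (\<Sum>k. (b k)^2) - suminf f"
        using suminf_mult[OF sa, of "1 - t"] suminf_mult[OF sb, of t] by simp
      also have "\<dots> \<le> (1 - t) * 1 + t * 1 - 1"
        using Ja Jb h S1 by (intro diff_mono add_mono mult_left_mono) auto
      finally have "suminf g \<le> 0" by simp
      moreover have "0 \<le> suminf g" by (rule suminf_nonneg[OF sg g0])
      ultimately have "suminf g = 0" by simp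
      then have "\<forall>k. g k = 0" using suminf_eq_zero_iff[OF sg g0] by simp
      then have "a k = b k" for k using gid[of k] h by simp
      then show False using h by auto
    qed
  qed
qed

theorem corollary3p19:
  fixes x :: "nat \<Rightarrow> real"
  assumes "x \<in> J_space"
  shows "extreme_point_seq x B_J \<longleftrightarrow> NPR_hered x \<and> l2_norm x = 1"
proof
  assume ext: "extreme_point_seq x B_J"
  have J: "J_norm x = 1" by (rule J_one[OF assms ext])
  have le1: "(\<Sum>k. (x k)^2) \<le> 1" using l2_le(2)[OF assms] J by simp
  have ge1: "(J_norm x)^2 \<le> (\<Sum>k. (x k)^2)" by (rule J_le_l2[OF assms ext])
  then have "(\<Sum>k. (x k)^2) = 1" using le1 J by simp
  then have "l2_norm x = 1" by (simp add: l2_norm_def)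
  moreover have "NPR_hered x" by (rule NPR_from[OF assms ge1])
  ultimately show "NPR_hered x \<and> l2_norm x = 1" by simp
next
  assume "NPR_hered x \<and> l2_norm x = 1"
  then show "extreme_point_seq x B_J" using conv[OF assms] by simp
qed


end
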